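(* As formal power series in $q$, $$\frac{1}{\prod_{i=1}^\infty(1-q^{ki})}\,m^\infty_\nu(q,k)=\sum_{\delta\in\mathcal P}q^{k|\delta|}\sum_{T\in D(\nu)}q^{\sum_{i=1}^k|\lambda_i(T)|}.$$
   Context: Identify a partition $\lambda=(a_1\ge a_2\ge\cdots)$ with $\sum_ja_j\epsilon_j$ in $\Lambda=\bigoplus_{j\ge1}\mathbb Z\epsilon_j$; put $\omega_i=\epsilon_1+\dots+\epsilon_i$; partitions are exactly elements with all $\omega$-coordinates $\ge0$. For $x,y\in\Lambda$, $y\le x$ means $x-y$ has all $\omega$-coordinates $\ge0$. $\mathcal P$ = partitions, $\mathcal P^k$ = $k$-tuples; $|\lambda|$ = number of boxes. $SST(\nu)$ = semistandard tableaux of shape $\nu$ with entries in $\mathbb Z_{>0}$, with the standard $\mathfrak{gl}_\infty$-crystal structure. For $T\in SST(\nu)$: $\mathrm{wt}(T)=\sum_j(\#\text{entries }j)\epsilon_j$, $\varepsilon_i(T)=\max\{m\ge0:\tilde e_i^mT\ne0\}$, $\varepsilon(T)=\sum_i\varepsilon_i(T)\omega_i$. $\mathrm{CLR}^\lambda_{\alpha,\nu}=\{T\in SST(\nu):\varepsilon(T)\le\alpha,\ \alpha+\mathrm{wt}(T)=\lambda\}$; it is known that $|\mathrm{CLR}^\lambda_{\alpha,\nu}|=c^\lambda_{\alpha,\nu}$, the Littlewood–Richardson coefficient. Fix $k\ge1$, partitions $\nu=(\nu_1^+,\nu_1^-,\dots,\nu_k^+,\nu_k^-)$; indices cyclic mod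 $k$ ($\lambda_0:=\lambda_k$). $\underline{SST}(\nu)=\prod_iSST(\nu_i^+)\times SST(\nu_i^-)$, $T=(T_1^+,T_1^-,\dots,T_k^+,T_k^-)$, $\mathrm{wt}(T_i)=\mathrm{wt}(T_i^+)-\mathrm{wt}(T_i^-)$. $\underline{\mathrm{CLR}}^\lambda_{\alpha,\nu}=\prod_{i=1}^k\mathrm{CLR}^{\lambda_i}_{\alpha_i,\nu_i^+}\times\mathrm{CLR}^{\lambda_{i-1}}_{\alpha_i,\nu_i^-}$. $D(\nu)$ = set of $T\in\underline{SST}(\nu)$ lying in some $\underline{\mathrm{CLR}}^\lambda_{\alpha,\nu}$ with $\lambda,\alpha\in\mathcal P^k$ (distinguished tableaux). For $T\in D(\nu)$, $\lambda_{\min}(T)$ is the coordinatewise (in $\omega$-coordinates) maximum of $S_i^\pm=\varepsilon(T_i^\pm)+\mathrm{wt}(T_i^+)-\sum_{j=2}^i\mathrm{wt}(T_j)$, $i=1,\dots,k$, and $\lambda_i(T)=\lambda_{\min}(T)+\sum_{j=2}^i\mathrm{wt}(T_j)$ (a partition). The stable $q$-multiplicity is $$m^\infty_\nu(q,k)=\Big[\prod_{i=1}^\infty(1-q^{ki})\Big]\sum_{\alpha,\lambda\in\mathcal P^k}q^{\sum_i|\lambda_i|}\prod_{i=1}^kc^{\lambda_i}_{\alpha_i,\nu_i^+}c^{\lambda_{i-1}}_{\alpha_i,\nu_i^-}.$$ *)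

theory Defs
  imports "HOL-Analysis.Analysis" "HOL-Computational_Algebra.Formal_Power_Series"
begin

(* Elements of Lambda = direct sum of Z eps_j (j >= 1): finitely supported functions nat => int,
   with the unused index 0 forced to be 0. *)
type_synonym lwt = "nat \<Rightarrow> int"
(* A tableau: (row, column) => entry, rows/columns 1-based, row 1 on top, 0 outside the shape. *)
type_synonym tab = "nat \<times> nat \<Rightarrow> nat"

definition in_Lambda :: "lwt \<Rightarrow> bool" where
  "in_Lambda x \<longleftrightarrow> x 0 = 0 \<and> finite {j. x j \<noteq> 0}"

(* omega-coordinates: x = sum_i (x_i - x_{i+1}) omega_i *)
definition omega_coord :: "lwt \<Rightarrow> nat \<Rightarrow> int" where
  "omega_coord x i = x i - x (Suc i)"

(* the element sum_{i>=1} c_i omega_i (c finitely supported) *)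
definition from_omega :: "(nat \<Rightarrow> int) \<Rightarrow> lwt" where
  "from_omega c j = (if j = 0 then 0 else (\<Sum>i\<in>{i. j \<le> i \<and> c i \<noteq> 0}. c i))"

definition is_partition :: "lwt \<Rightarrow> bool" where
  "is_partition x \<longleftrightarrow> in_Lambda x \<and> (\<forall>i\<ge>1. omega_coord x i \<ge> 0)"

definition dom_le :: "lwt \<Rightarrow> lwt \<Rightarrow> bool" where
  "dom_le y x \<longleftrightarrow> (\<forall>i\<ge>1. omega_coord (\<lambda>j. x j - y j) i \<ge> 0)"

definition boxes :: "lwt \<Rightarrow> nat" where
  "boxes x = nat (\<Sum>j\<in>{j. x j \<noteq> 0}. x j)"

definition cells :: "lwt \<Rightarrow> (nat \<times> nat) set" where
  "cells \<nu> = {(r, c). 1 \<le> r \<and> 1 \<le> c \<and> int c \<le> \<nu> r}"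

definition SST :: "lwt \<Rightarrow> tab set" where
  "SST \<nu> = {T. (\<forall>p. p \<notin> cells \<nu> \<longrightarrow> T p = 0)
              \<and> (\<forall>p\<in>cells \<nu>. 1 \<le> T p)
              \<and> (\<forall>r c. (r, c) \<in> cells \<nu> \<and> (r, Suc c) \<in> cells \<nu> \<longrightarrow> T (r, c) \<le> T (r, Suc c))
              \<and> (\<forall>r c. (r, c) \<in> cells \<nu> \<and> (Suc r, c) \<in> cells \<nu> \<longrightarrow> T (r, c) < T (Suc r, c))}"

definition wt_tab :: "tab \<Rightarrow> lwt" where
  "wt_tab T j = (if j = 0 then 0 else int (card {p. T p = j}))"

definition nrows :: "lwt \<Rightarrow> nat" where
  "nrows \<nu> = card {j. \<nu> j \<noteq> 0}"

definition read_cells :: "lwt \<Rightarrow> (nat \<times> nat) list" where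
  "read_cells \<nu> = concat (map (\<lambda>r. map (\<lambda>c. (r, c)) [1..<nat (\<nu> r) + 1]) (rev [1..<nrows \<nu> + 1]))"

(* signature rule: scanning left to right, a letter i+1 is pushed, a letter i cancels the
   nearest preceding uncancelled i+1.  Result: positions of the uncancelled letters i+1,
   the leftmost one being the last element of the list. *)
fun sig_stack :: "nat \<Rightarrow> 'p list \<Rightarrow> ('p \<times> nat) list \<Rightarrow> 'p list" where
  "sig_stack i st [] = st"
| "sig_stack i st ((p, x) # w) =
     (if x = Suc i then sig_stack i (p # st) w
      else if x = i then sig_stack i (drop 1 st) w
      else sig_stack i st w)"

(* Kashiwara operator e~_i on SST(nu); None stands for 0 *)
definition e_tab :: "lwt \<Rightarrow> nat \<Rightarrow> tab \<Rightarrow> tab option" where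
  "e_tab \<nu> i T = (let st = sig_stack i [] (map (\<lambda>p. (p, T p)) (read_cells \<nu>))
                   in if st = [] then None else Some (T(last st := i)))"

fun e_pow :: "lwt \<Rightarrow> nat \<Rightarrow> nat \<Rightarrow> tab \<Rightarrow> tab option" where
  "e_pow \<nu> i 0 T = Some T"
| "e_pow \<nu> i (Suc m) T = (case e_pow \<nu> i m T of None \<Rightarrow> None | Some T' \<Rightarrow> e_tab \<nu> i T')"

definition eps_i :: "lwt \<Rightarrow> nat \<Rightarrow> tab \<Rightarrow> nat" where
  "eps_i \<nu> i T = (GREATEST m. e_pow \<nu> i m T \<noteq> None)"

definition eps_vec :: "lwt \<Rightarrow> tab \<Rightarrow> lwt" where
  "eps_vec \<nu> T = from_omega (\<lambda>i. if i = 0 then 0 else int (eps_i \<nu> i T))"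

definition CLR :: "lwt \<Rightarrow> lwt \<Rightarrow> lwt \<Rightarrow> tab set" where
  "CLR lam \<alpha> \<nu> = {T \<in> SST \<nu>. dom_le (eps_vec \<nu> T) \<alpha> \<and> (\<forall>j. \<alpha> j + wt_tab T j = lam j)}"

(* Littlewood-Richardson coefficient, via the known identity |CLR| = c *)
definition lr_coeff :: "lwt \<Rightarrow> lwt \<Rightarrow> lwt \<Rightarrow> nat" where
  "lr_coeff lam \<alpha> \<nu> = card (CLR lam \<alpha> \<nu>)"

definition prev :: "nat \<Rightarrow> nat \<Rightarrow> nat" where
  "prev k i = (if i = 1 then k else i - 1)"

definition is_ptuple :: "nat \<Rightarrow> (nat \<Rightarrow> lwt) \<Rightarrow> bool" where
  "is_ptuple k x \<longleftrightarrow> (\<forall>i\<in>{1..k}. is_partition (x i)) \<and> (\<forall>i. i \<notin> {1..k} \<longrightarrow> x i = (\<lambda>_. 0))"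

definition prodP :: "nat \<Rightarrow> real fps" where
  "prodP k = Abs_fps (\<lambda>n. fps_nth (\<Prod>i\<in>{1..n}. 1 - fps_X ^ (k * i)) n)"

definition m_inf :: "nat \<Rightarrow> (nat \<Rightarrow> lwt) \<Rightarrow> (nat \<Rightarrow> lwt) \<Rightarrow> real fps" where
  "m_inf k nup num = prodP k * Abs_fps (\<lambda>n.
     infsum (\<lambda>p. real (\<Prod>i\<in>{1..k}. lr_coeff (snd p i) (fst p i) (nup i)
                                    * lr_coeff (snd p (prev k i)) (fst p i) (num i)))
       {(\<alpha>, lam). is_ptuple k \<alpha> \<and> is_ptuple k lam \<and> (\<Sum>i\<in>{1..k}. boxes (lam i)) = n})"

(* distinguished tableaux; T = (T^+, T^-) with T^+ i = T_i^+, T^- i = T_i^- *)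
definition Dtab :: "nat \<Rightarrow> (nat \<Rightarrow> lwt) \<Rightarrow> (nat \<Rightarrow> lwt) \<Rightarrow> ((nat \<Rightarrow> tab) \<times> (nat \<Rightarrow> tab)) set" where
  "Dtab k nup num = {(Tp, Tm).
     (\<forall>i\<in>{1..k}. Tp i \<in> SST (nup i) \<and> Tm i \<in> SST (num i))
     \<and> (\<forall>i. i \<notin> {1..k} \<longrightarrow> Tp i = (\<lambda>_. 0) \<and> Tm i = (\<lambda>_. 0))
     \<and> (\<exists>lam \<alpha>. is_ptuple k lam \<and> is_ptuple k \<alpha> \<and>
          (\<forall>i\<in>{1..k}. Tp i \<in> CLR (lam i) (\<alpha> i) (nup i) \<and> Tm i \<in> CLR (lam (prev k i)) (\<alpha> i) (num i)))}"

definition cumwt :: "(nat \<Rightarrow> tab) \<Rightarrow> (nat \<Rightarrow> tab) \<Rightarrow> nat \<Rightarrow> lwt" where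
  "cumwt Tp Tm i = (\<lambda>j. \<Sum>l\<in>{2..i}. wt_tab (Tp l) j - wt_tab (Tm l) j)"

definition S_plus :: "(nat \<Rightarrow> lwt) \<Rightarrow> (nat \<Rightarrow> tab) \<Rightarrow> (nat \<Rightarrow> tab) \<Rightarrow> nat \<Rightarrow> lwt" where
  "S_plus nup Tp Tm i = (\<lambda>j. eps_vec (nup i) (Tp i) j + wt_tab (Tp i) j - cumwt Tp Tm i j)"

definition S_minus :: "(nat \<Rightarrow> lwt) \<Rightarrow> (nat \<Rightarrow> tab) \<Rightarrow> (nat \<Rightarrow> tab) \<Rightarrow> nat \<Rightarrow> lwt" where
  "S_minus num Tp Tm i = (\<lambda>j. eps_vec (num i) (Tm i) j + wt_tab (Tp i) j - cumwt Tp Tm i j)"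

definition lam_min :: "nat \<Rightarrow> (nat \<Rightarrow> lwt) \<Rightarrow> (nat \<Rightarrow> lwt) \<Rightarrow> (nat \<Rightarrow> tab) \<Rightarrow> (nat \<Rightarrow> tab) \<Rightarrow> lwt" where
  "lam_min k nup num Tp Tm = from_omega (\<lambda>a.
     Max ((\<lambda>i. omega_coord (S_plus nup Tp Tm i) a) ` {1..k}
          \<union> (\<lambda>i. omega_coord (S_minus num Tp Tm i) a) ` {1..k}))"

definition lam_T :: "nat \<Rightarrow> (nat \<Rightarrow> lwt) \<Rightarrow> (nat \<Rightarrow> lwt) \<Rightarrow> (nat \<Rightarrow> tab) \<Rightarrow> (nat \<Rightarrow> tab) \<Rightarrow> nat \<Rightarrow> lwt" where
  "lam_T k nup num Tp Tm i = (\<lambda>j. lam_min k nup num Tp Tm j + cumwt Tp Tm i j)"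

end

theory Submission
  imports Defs
begin



lemma in_Lambda_add: "in_Lambda x \<Longrightarrow> in_Lambda y \<Longrightarrow> in_Lambda (\<lambda>j. x j + y j)"
  unfolding in_Lambda_def
  by (auto intro: finite_subset[of _ "{j. x j \<noteq> 0} \<union> {j. y j \<noteq> 0}"])

lemma in_Lambda_diff: "in_Lambda x \<Longrightarrow> in_Lambda y \<Longrightarrow> in_Lambda (\<lambda>j. x j - y j)"
  unfolding in_Lambda_def
  by (auto intro: finite_subset[of _ "{j. x j \<noteq> 0} \<union> {j. y j \<noteq> 0}"])

lemma in_Lambda_sum: "finite A \<Longrightarrow> (\<And>l. l \<in> A \<Longrightarrow> in_Lambda (f l)) \<Longrightarrow> in_Lambda (\<lambda>j. \<Sum>l\<in>A. f l j)"
proof (induction A rule: finite_induct)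
  case empty then show ?case by (simp add: in_Lambda_def)
next
  case (insert a A)
  then have "in_Lambda (\<lambda>j. f a j + (\<Sum>l\<in>A. f l j))" by (intro in_Lambda_add) auto
  then show ?case using insert by simp
qed

lemma in_Lambda_bound: "in_Lambda x \<Longrightarrow> \<exists>N. \<forall>j\<ge>N. x j = 0"
proof -
  assume "in_Lambda x"
  then have f: "finite {j. x j \<noteq> 0}" by (simp add: in_Lambda_def)
  obtain N where "\<forall>j\<in>{j. x j \<noteq> 0}. j < N" using finite_nat_bounded[OF f] by auto
  then show ?thesis by (metis leD mem_Collect_eq)
qed

lemma from_omega_fin:
  assumes "finite {i. c i \<noteq> 0}"
  shows "in_Lambda (from_omega c)" "\<And>i. 1 \<le> i \<Longrightarrow> omega_coord (from_omega c) i = c i"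
proof -
  let ?F = "{i. c i \<noteq> 0}"
  obtain N where N: "\<forall>i\<in>?F. i < N" using finite_nat_bounded[OF assms] by auto
  have z: "from_omega c j = 0" if "j \<ge> N" for j
  proof -
    have "{i. j \<le> i \<and> c i \<noteq> 0} = {}" using N that by force
    then show ?thesis by (simp add: from_omega_def)
  qed
  have "{j. from_omega c j \<noteq> 0} \<subseteq> {..<N}" using z by (auto simp: not_less[symmetric])
  then show "in_Lambda (from_omega c)" unfolding in_Lambda_def
    by (simp add: from_omega_def finite_subset)
  fix i :: nat assume "1 \<le> i"
  have fin: "finite {l. Suc i \<le> l \<and> c l \<noteq> 0}" by (rule finite_subset[OF _ assms]) auto
  show "omega_coord (from_omega c) i = c i"
  proof (cases "c i = 0")
    case True
    then have "{l. i \<le> l \<and> c l \<noteq> 0} = {l. Suc i \<le> l \<and> c l \<noteq> 0}"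
      using le_eq_less_or_eq by fastforce
    then show ?thesis using True \<open>1 \<le> i\<close> by (simp add: omega_coord_def from_omega_def)
  next
    case False
    then have e: "{l. i \<le> l \<and> c l \<noteq> 0} = insert i {l. Suc i \<le> l \<and> c l \<noteq> 0}"
      using le_eq_less_or_eq by fastforce
    show ?thesis using False \<open>1 \<le> i\<close> fin by (simp add: omega_coord_def from_omega_def e)
  qed
qed

lemma from_omega_infin:
  assumes "infinite {i. c i \<noteq> 0}"
  shows "from_omega c j = 0"
proof -
  have "infinite {i. j \<le> i \<and> c i \<noteq> 0}"
  proof
    assume "finite {i. j \<le> i \<and> c i \<noteq> 0}"
    then have "finite ({i. j \<le> i \<and> c i \<noteq> 0} \<union> {..<j})" by simp
    moreover have "{i. c i \<noteq> 0} \<subseteq> {i. j \<le> i \<and> c i \<noteq> 0} \<union> {..<j}" by auto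
    ultimately show False using assms finite_subset by blast
  qed
  then show ?thesis by (simp add: from_omega_def)
qed

lemma partition_nonneg_aux:
  assumes "is_partition x" "\<forall>j\<ge>N. x j = 0" "1 \<le> j"
  shows "x j \<ge> 0"
  using assms(3)
proof (induction "N - j" arbitrary: j)
  case 0 then show ?case using assms(2) by auto
next
  case (Suc m)
  then have "x (Suc j) \<ge> 0" by auto
  moreover have "omega_coord x j \<ge> 0" using assms(1) Suc.prems by (simp add: is_partition_def)
  ultimately show ?case by (simp add: omega_coord_def)
qed

lemma partition_nonneg: "is_partition x \<Longrightarrow> x j \<ge> 0"
proof -
  assume p: "is_partition x"
  then obtain N where "\<forall>j\<ge>N. x j = 0" using in_Lambda_bound is_partition_def by blast
  then show ?thesis using p partition_nonneg_aux[OF p] by (cases "j = 0") (auto simp: is_partition_def in_Lambda_def)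
qed

lemma partition_mono: assumes "is_partition x" "1 \<le> i" "i \<le> j" shows "x j \<le> x i"
  using assms(3)
proof (induction j rule: dec_induct)
  case base then show ?case by simp
next
  case (step n)
  then have "omega_coord x n \<ge> 0" using assms by (simp add: is_partition_def)
  then show ?case using step by (simp add: omega_coord_def)
qed

lemma partitionI: "in_Lambda x \<Longrightarrow> (\<And>a. 1 \<le> a \<Longrightarrow> omega_coord x a \<ge> 0) \<Longrightarrow> is_partition x"
  by (simp add: is_partition_def)

lemma partition_add: "is_partition x \<Longrightarrow> is_partition y \<Longrightarrow> is_partition (\<lambda>j. x j + y j)"
  unfolding is_partition_def by (auto intro: in_Lambda_add add_mono simp: omega_coord_def)

lemma boxes_sum:
  assumes "finite F" "{j. x j \<noteq> 0} \<subseteq> F"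
  shows "boxes x = nat (\<Sum>j\<in>F. x j)"
proof -
  have "(\<Sum>j\<in>{j. x j \<noteq> 0}. x j) = (\<Sum>j\<in>F. x j)"
    by (rule sum.mono_neutral_left) (use assms in auto)
  then show ?thesis by (simp add: boxes_def)
qed

lemma boxes_add:
  assumes "is_partition x" "is_partition y"
  shows "boxes (\<lambda>j. x j + y j) = boxes x + boxes y"
proof -
  let ?F = "{j. x j \<noteq> 0} \<union> {j. y j \<noteq> 0}"
  have f: "finite ?F" using assms by (simp add: is_partition_def in_Lambda_def)
  have "boxes (\<lambda>j. x j + y j) = nat (\<Sum>j\<in>?F. x j + y j)" by (rule boxes_sum[OF f]) auto
  moreover have "boxes x = nat (\<Sum>j\<in>?F. x j)" by (rule boxes_sum[OF f]) auto
  moreover have "boxes y = nat (\<Sum>j\<in>?F. y j)" by (rule boxes_sum[OF f]) auto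
  moreover have "(\<Sum>j\<in>?F. x j) \<ge> 0" "(\<Sum>j\<in>?F. y j) \<ge> 0"
    using partition_nonneg assms by (auto intro: sum_nonneg)
  ultimately show ?thesis by (simp add: sum.distrib nat_add_distrib)
qed

lemma boxes_ge_entry:
  assumes "is_partition x"
  shows "x j \<le> int (boxes x)"
proof -
  let ?F = "insert j {j. x j \<noteq> 0}"
  have f: "finite ?F" using assms by (simp add: is_partition_def in_Lambda_def)
  have b: "boxes x = nat (\<Sum>l\<in>?F. x l)" by (rule boxes_sum[OF f]) auto
  have "x j \<le> (\<Sum>l\<in>?F. x l)"
    by (rule member_le_sum) (use partition_nonneg[OF assms] f in auto)
  then show ?thesis using b by linarith
qed

lemma boxes_ge_index:
  assumes "is_partition x" "1 \<le> v" "1 \<le> x v"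
  shows "v \<le> boxes x"
proof -
  let ?F = "{1..v} \<union> {j. x j \<noteq> 0}"
  have f: "finite ?F" using assms by (simp add: is_partition_def in_Lambda_def)
  have b: "boxes x = nat (\<Sum>l\<in>?F. x l)" by (rule boxes_sum[OF f]) auto
  have "(\<Sum>l\<in>{1..v}. x l) \<le> (\<Sum>l\<in>?F. x l)"
    by (rule sum_mono2) (use partition_nonneg[OF assms(1)] f in auto)
  moreover have "(\<Sum>l\<in>{1..v}. (1::int)) \<le> (\<Sum>l\<in>{1..v}. x l)"
    by (rule sum_mono) (use partition_mono[OF assms(1)] assms in force)
  ultimately show ?thesis using b by simp
qed


lemma cells_finite: assumes "is_partition \<nu>" shows "finite (cells \<nu>)"
proof -
  have "cells \<nu> \<subseteq> Sigma {r. \<nu> r \<noteq> 0} (\<lambda>r. {..nat (\<nu> r)})"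
    unfolding cells_def by auto
  moreover have "finite (Sigma {r. \<nu> r \<noteq> 0} (\<lambda>r. {..nat (\<nu> r)}))"
    using assms by (simp add: is_partition_def in_Lambda_def)
  ultimately show ?thesis using finite_subset by blast
qed

lemma SST_zero: "T \<in> SST \<nu> \<Longrightarrow> p \<notin> cells \<nu> \<Longrightarrow> T p = 0"
  unfolding SST_def by blast

lemma SST_level_sub: "T \<in> SST \<nu> \<Longrightarrow> 1 \<le> j \<Longrightarrow> {p. T p = j} \<subseteq> cells \<nu>"
  using SST_zero by fastforce

lemma wt_in_Lambda: assumes "is_partition \<nu>" "T \<in> SST \<nu>" shows "in_Lambda (wt_tab T)"
proof -
  have "{j. wt_tab T j \<noteq> 0} \<subseteq> T ` cells \<nu>"
  proof
    fix j assume "j \<in> {j. wt_tab T j \<noteq> 0}"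
    then have j: "j \<noteq> 0" "card {p. T p = j} \<noteq> 0" by (auto simp: wt_tab_def split: if_splits)
    then have "{p. T p = j} \<noteq> {}" by (metis card.empty)
    then obtain p where "T p = j" by blast
    moreover have "p \<in> cells \<nu>" using SST_zero[OF assms(2)] j \<open>T p = j\<close> by fastforce
    ultimately show "j \<in> T ` cells \<nu>" by blast
  qed
  then have "finite {j. wt_tab T j \<noteq> 0}"
    using cells_finite[OF assms(1)] finite_subset by blast
  moreover have "wt_tab T 0 = 0" by (simp add: wt_tab_def)
  ultimately show ?thesis by (simp add: in_Lambda_def)
qed

lemma nrows_ge: assumes "is_partition \<nu>" "1 \<le> r" "1 \<le> \<nu> r" shows "r \<le> nrows \<nu>"
proof -
  have "{1..r} \<subseteq> {j. \<nu> j \<noteq> 0}" using partition_mono[OF assms(1)] assms by force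
  then have "card {1..r} \<le> card {j. \<nu> j \<noteq> 0}"
    using assms(1) by (intro card_mono) (auto simp: is_partition_def in_Lambda_def)
  then show ?thesis by (simp add: nrows_def)
qed

lemma set_read_cells: assumes "is_partition \<nu>" shows "set (read_cells \<nu>) = cells \<nu>"
proof
  show "set (read_cells \<nu>) \<subseteq> cells \<nu>" unfolding read_cells_def cells_def by auto
  show "cells \<nu> \<subseteq> set (read_cells \<nu>)"
  proof
    fix p assume "p \<in> cells \<nu>"
    then obtain r c where p: "p = (r, c)" "1 \<le> r" "1 \<le> c" "int c \<le> \<nu> r" by (auto simp: cells_def)
    then have "r \<le> nrows \<nu>" using nrows_ge[OF assms] by simp
    then show "p \<in> set (read_cells \<nu>)" using p unfolding read_cells_def by force
  qed
qed

lemma distinct_concat_rows: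
  "distinct rs \<Longrightarrow> distinct (concat (map (\<lambda>r. map (\<lambda>c. (r, c)) (g r)) rs))"
  if "\<And>r. distinct (g r)"
  using that by (induction rs) (auto simp: distinct_map inj_on_def)

lemma distinct_read_cells: "distinct (read_cells \<nu>)"
  unfolding read_cells_def by (rule distinct_concat_rows) auto

definition word :: "lwt \<Rightarrow> tab \<Rightarrow> ((nat \<times> nat) \<times> nat) list" where
  "word \<nu> T = map (\<lambda>p. (p, T p)) (read_cells \<nu>)"



lemma sig_append: "sig_stack i st (u @ v) = sig_stack i (sig_stack i st u) v"
  by (induction u arbitrary: st) auto

lemma sig_len_eq: "length s = length t \<Longrightarrow> length (sig_stack i s v) = length (sig_stack i t v)"
proof (induction v arbitrary: s t)
  case Nil then show ?case by simp
next
  case (Cons a v)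
  obtain q y where a: "a = (q, y)" by (cases a)
  have 1: "length (sig_stack i (q#s) v) = length (sig_stack i (q#t) v)"
    using Cons.IH[of "q#s" "q#t"] Cons.prems by simp
  have 2: "length (sig_stack i (drop 1 s) v) = length (sig_stack i (drop 1 t) v)"
    using Cons.IH[of "drop 1 s" "drop 1 t"] Cons.prems by simp
  have 3: "length (sig_stack i s v) = length (sig_stack i t v)"
    using Cons.IH[of s t] Cons.prems by simp
  show ?case using 1 2 3 a by (simp del: sig_stack.simps add: sig_stack.simps(2))
qed

lemma sig_len_cons: "length (sig_stack i (x # s) v) \<le> Suc (length (sig_stack i s v))"
proof (induction v arbitrary: x s)
  case Nil then show ?case by simp
next
  case (Cons a v)
  obtain q y where a: "a = (q, y)" by (cases a)
  show ?case
  proof (cases "y = Suc i")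
    case True
    have "length (sig_stack i (q # x # s) v) = length (sig_stack i (x # q # s) v)"
      by (rule sig_len_eq) simp
    then show ?thesis using True a Cons.IH[of x "q # s"] by simp
  next
    case False
    show ?thesis
    proof (cases "y = i")
      case True
      show ?thesis
      proof (cases s)
        case Nil then show ?thesis using True False a by simp
      next
        case (Cons z s')
        then show ?thesis using True False a Cons.IH[of z s'] by simp
      qed
    next
      case False2: False
      then show ?thesis using False a Cons.IH[of x s] by simp
    qed
  qed
qed

lemma sig_shape: "\<exists>pre j. sig_stack i s v = pre @ drop j s \<and> set pre \<subseteq> {q. (q, Suc i) \<in> set v}"
proof (induction v arbitrary: s)
  case Nil then show ?case by (intro exI[of _ "[]"] exI[of _ 0]) simp
next
  case (Cons a w)
  obtain p x where a: "a = (p, x)" by (cases a)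
  show ?case
  proof (cases "x = Suc i")
    case True
    obtain pre j where pre: "sig_stack i (p # s) w = pre @ drop j (p # s)"
      "set pre \<subseteq> {q. (q, Suc i) \<in> set w}" using Cons.IH[of "p # s"] by blast
    have e: "sig_stack i s (a # w) = sig_stack i (p # s) w" using a True by simp
    show ?thesis
    proof (cases j)
      case 0
      then show ?thesis using True pre e a by (intro exI[of _ "pre @ [p]"] exI[of _ 0]) auto
    next
      case (Suc j')
      then show ?thesis using True pre e a by (intro exI[of _ "pre"] exI[of _ j']) auto
    qed
  next
    case False
    show ?thesis
    proof (cases "x = i")
      case True
      obtain pre j where pre: "sig_stack i (drop 1 s) w = pre @ drop j (drop 1 s)"
        "set pre \<subseteq> {q. (q, Suc i) \<in> set w}" using Cons.IH[of "drop 1 s"] by blast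
      have e: "sig_stack i s (a # w) = sig_stack i (drop 1 s) w" using a True False by simp
      show ?thesis using pre e by (intro exI[of _ pre] exI[of _ "Suc j"]) auto
    next
      case False2: False
      obtain pre j where pre: "sig_stack i s w = pre @ drop j s"
        "set pre \<subseteq> {q. (q, Suc i) \<in> set w}" using Cons.IH[of s] by blast
      have e: "sig_stack i s (a # w) = sig_stack i s w" using a False2 False by simp
      show ?thesis using pre e by (intro exI[of _ pre] exI[of _ j]) auto
    qed
  qed
qed

lemma sig_set: "set (sig_stack i [] v) \<subseteq> {q. (q, Suc i) \<in> set v}"
  using sig_shape[of i "[]" v] by auto

definition cntw :: "nat \<Rightarrow> ('p \<times> nat) list \<Rightarrow> nat" where
  "cntw x w = length (filter (\<lambda>(q, y). y = x) w)"

lemma sig_len_lower: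
  "int (length (sig_stack i s v)) \<ge> int (length s) + int (cntw (Suc i) v) - int (cntw i v)"
proof (induction v arbitrary: s)
  case Nil then show ?case by (simp add: cntw_def)
next
  case (Cons a w)
  obtain p x where a: "a = (p, x)" by (cases a)
  show ?case
  proof (cases "x = Suc i")
    case True
    then show ?thesis using Cons.IH[of "p # s"] a by (simp add: cntw_def)
  next
    case False
    show ?thesis
    proof (cases "x = i")
      case True
      then show ?thesis using Cons.IH[of "drop 1 s"] a False by (simp add: cntw_def)
    next
      case False2: False
      then show ?thesis using Cons.IH[of s] a False by (simp add: cntw_def)
    qed
  qed
qed

lemma sig_change:
  assumes w: "w = u @ (p, Suc i) # v" and pu: "p \<notin> fst ` set u" and pv: "p \<notin> fst ` set v"
    and ne: "sig_stack i [] w \<noteq> []" and l: "last (sig_stack i [] w) = p"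
  shows "length (sig_stack i [] w) \<le> Suc (length (sig_stack i [] (u @ (p, i) # v)))"
proof -
  define s0 where "s0 = sig_stack i [] u"
  have st: "sig_stack i [] w = sig_stack i (p # s0) v" using w by (simp add: sig_append s0_def)
  have s0set: "set s0 \<subseteq> fst ` set u" using sig_set[of i u] unfolding s0_def by force
  obtain pre j where pre: "sig_stack i (p # s0) v = pre @ drop j (p # s0)"
    "set pre \<subseteq> {q. (q, Suc i) \<in> set v}" using sig_shape[of i "p # s0" v] by blast
  have preset: "set pre \<subseteq> fst ` set v" using pre(2) by force
  have s0e: "s0 = []"
  proof (rule ccontr)
    assume "s0 \<noteq> []"
    show False
    proof (cases "drop j (p # s0) = []")
      case True
      then have "last pre = p" "pre \<noteq> []" using l ne st pre(1) by auto
      then have "p \<in> set pre" by auto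
      then show False using preset pv by auto
    next
      case False
      then have "last (sig_stack i [] w) = last (drop j (p # s0))" using st pre(1) by simp
      also have "\<dots> = last (p # s0)" using False by (simp add: last_drop)
      also have "\<dots> = last s0" using \<open>s0 \<noteq> []\<close> by simp
      finally have "p \<in> set s0" using l \<open>s0 \<noteq> []\<close> by auto
      then show False using s0set pu by auto
    qed
  qed
  have "sig_stack i [] (u @ (p, i) # v) = sig_stack i [] v"
    using s0e by (simp add: sig_append s0_def[symmetric])
  moreover have "sig_stack i [] w = sig_stack i [p] v" using st s0e by simp
  ultimately show ?thesis using sig_len_cons[of i p "[]" v] by simp
qed


lemma e_pow_Suc': "e_pow \<nu> i (Suc m) T = (case e_tab \<nu> i T of None \<Rightarrow> None | Some T' \<Rightarrow> e_pow \<nu> i m T')"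
proof (induction m arbitrary: T)
  case 0 then show ?case by (cases "e_tab \<nu> i T") auto
next
  case (Suc m)
  have "e_pow \<nu> i (Suc (Suc m)) T = (case e_pow \<nu> i (Suc m) T of None \<Rightarrow> None | Some T' \<Rightarrow> e_tab \<nu> i T')"
    by simp
  also have "\<dots> = (case e_tab \<nu> i T of None \<Rightarrow> None | Some T' \<Rightarrow> e_pow \<nu> i (Suc m) T')"
    using Suc by (cases "e_tab \<nu> i T") auto
  finally show ?case .
qed

lemma e_tab_word: "e_tab \<nu> i T = (let st = sig_stack i [] (word \<nu> T) in if st = [] then None else Some (T(last st := i)))"
  by (simp add: e_tab_def word_def)

lemma e_tab_Some:
  assumes "e_tab \<nu> i T = Some T'"
  shows "sig_stack i [] (word \<nu> T) \<noteq> [] \<and> last (sig_stack i [] (word \<nu> T)) \<in> set (read_cells \<nu>)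
     \<and> T (last (sig_stack i [] (word \<nu> T))) = Suc i \<and> T' = T(last (sig_stack i [] (word \<nu> T)) := i)"
proof -
  let ?st = "sig_stack i [] (word \<nu> T)"
  have ne: "?st \<noteq> []" and T': "T' = T(last ?st := i)"
    using assms by (auto simp: e_tab_def word_def Let_def split: if_splits)
  have "last ?st \<in> set ?st" using ne by simp
  then have "(last ?st, Suc i) \<in> set (word \<nu> T)" using sig_set[of i "word \<nu> T"] by blast
  then show ?thesis using ne T' by (auto simp: word_def)
qed

lemma cntw_word: "cntw x (word \<nu> T) = card ({q. T q = x} \<inter> set (read_cells \<nu>))"
proof -
  have "cntw x (word \<nu> T) = length (filter (\<lambda>q. T q = x) (read_cells \<nu>))"
    by (simp add: cntw_def word_def filter_map o_def)
  then show ?thesis using distinct_read_cells by (simp add: distinct_length_filter)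
qed

lemma cntw_change:
  assumes "p \<in> set (read_cells \<nu>)" "T p = Suc i"
  shows "cntw (Suc i) (word \<nu> (T(p := i))) = cntw (Suc i) (word \<nu> T) - 1"
proof -
  have "{q. (T(p := i)) q = Suc i} \<inter> set (read_cells \<nu>) = ({q. T q = Suc i} \<inter> set (read_cells \<nu>)) - {p}"
    by auto
  then show ?thesis using assms by (simp add: cntw_word)
qed

lemma e_pow_upper: "e_pow \<nu> i m T \<noteq> None \<Longrightarrow> m \<le> cntw (Suc i) (word \<nu> T)"
proof (induction m arbitrary: T)
  case 0 then show ?case by simp
next
  case (Suc m)
  then obtain T' where T': "e_tab \<nu> i T = Some T'" "e_pow \<nu> i m T' \<noteq> None"
    by (cases "e_tab \<nu> i T") (auto simp: e_pow_Suc' simp del: e_pow.simps)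
  let ?p = "last (sig_stack i [] (word \<nu> T))"
  have p: "?p \<in> set (read_cells \<nu>)" "T ?p = Suc i" "T' = T(?p := i)" using e_tab_Some[OF T'(1)] by auto
  have "m \<le> cntw (Suc i) (word \<nu> T')" using Suc.IH T'(2) by blast
  moreover have "cntw (Suc i) (word \<nu> T') = cntw (Suc i) (word \<nu> T) - 1"
    using p cntw_change by simp
  moreover have "cntw (Suc i) (word \<nu> T) \<ge> 1"
  proof -
    have "?p \<in> {q. T q = Suc i} \<inter> set (read_cells \<nu>)" using p by simp
    then have "{q. T q = Suc i} \<inter> set (read_cells \<nu>) \<noteq> {}" by blast
    then show ?thesis by (simp add: cntw_word Suc_le_eq card_gt_0_iff)
  qed
  ultimately show ?case by linarith
qed

lemma e_pow_lower: "m \<le> length (sig_stack i [] (word \<nu> T)) \<Longrightarrow> e_pow \<nu> i m T \<noteq> None"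
proof (induction m arbitrary: T)
  case 0 then show ?case by simp
next
  case (Suc m)
  define st where "st = sig_stack i [] (word \<nu> T)"
  define p where "p = last st"
  have ne: "st \<noteq> []" using Suc.prems by (auto simp: st_def)
  have "p \<in> set st" using ne by (simp add: p_def)
  then have "(p, Suc i) \<in> set (word \<nu> T)" using sig_set[of i "word \<nu> T"] by (auto simp: st_def)
  then have pin: "p \<in> set (read_cells \<nu>)" and Tp: "T p = Suc i" by (auto simp: word_def)
  obtain ru rv where rc: "read_cells \<nu> = ru @ p # rv" using split_list[OF pin] by blast
  have dist: "p \<notin> set ru" "p \<notin> set rv" using distinct_read_cells[of \<nu>] rc by auto
  define T' where "T' = T(p := i)"
  have eT: "e_tab \<nu> i T = Some T'" using ne
    by (simp add: e_tab_word T'_def Let_def st_def[symmetric] p_def[symmetric])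
  have w: "word \<nu> T = map (\<lambda>q. (q, T q)) ru @ (p, Suc i) # map (\<lambda>q. (q, T q)) rv"
    using Tp by (simp add: word_def rc)
  have m1: "map (\<lambda>q. (q, T' q)) ru = map (\<lambda>q. (q, T q)) ru"
    using dist(1) by (auto simp: T'_def)
  have m2: "map (\<lambda>q. (q, T' q)) rv = map (\<lambda>q. (q, T q)) rv"
    using dist(2) by (auto simp: T'_def)
  have w': "word \<nu> T' = map (\<lambda>q. (q, T q)) ru @ (p, i) # map (\<lambda>q. (q, T q)) rv"
    using m1 m2 by (simp add: word_def rc T'_def)
  have "length st \<le> Suc (length (sig_stack i [] (word \<nu> T')))"
    unfolding w' st_def by (rule sig_change[OF w]) (use dist ne in \<open>force simp: st_def p_def\<close>)+
  then have "m \<le> length (sig_stack i [] (word \<nu> T'))" using Suc.prems by (simp add: st_def)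
  then have "e_pow \<nu> i m T' \<noteq> None" using Suc.IH by blast
  then show ?case using eT by (simp add: e_pow_Suc' del: e_pow.simps)
qed

lemma eps_i_upper: "eps_i \<nu> i T \<le> cntw (Suc i) (word \<nu> T)"
proof -
  have "e_pow \<nu> i 0 T \<noteq> None" by simp
  then show ?thesis unfolding eps_i_def by (rule e_pow_upper[OF GreatestI_nat[OF _ e_pow_upper]])
qed

lemma eps_i_lower: "length (sig_stack i [] (word \<nu> T)) \<le> eps_i \<nu> i T"
proof -
  have "e_pow \<nu> i (length (sig_stack i [] (word \<nu> T))) T \<noteq> None" by (rule e_pow_lower) simp
  then show ?thesis unfolding eps_i_def by (rule Greatest_le_nat[OF _ e_pow_upper])
qed


lemma cntw_wt:
  assumes "is_partition \<nu>" "T \<in> SST \<nu>" "1 \<le> x"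
  shows "int (cntw x (word \<nu> T)) = wt_tab T x"
proof -
  have "{q. T q = x} \<inter> set (read_cells \<nu>) = {q. T q = x}"
    using SST_level_sub[OF assms(2,3)] set_read_cells[OF assms(1)] by blast
  then show ?thesis using assms(3) by (simp add: cntw_word wt_tab_def)
qed

lemma eps_props:
  assumes "is_partition \<nu>" "T \<in> SST \<nu>"
  shows "in_Lambda (eps_vec \<nu> T)"
    and "\<And>a. 1 \<le> a \<Longrightarrow> omega_coord (eps_vec \<nu> T) a = int (eps_i \<nu> a T)"
    and "\<And>a. 1 \<le> a \<Longrightarrow> wt_tab T (Suc a) - wt_tab T a \<le> int (eps_i \<nu> a T)"
proof -
  define c where "c = (\<lambda>i. if i = 0 then 0 else int (eps_i \<nu> i T))"
  have wl: "in_Lambda (wt_tab T)" by (rule wt_in_Lambda[OF assms])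
  have "{i. c i \<noteq> 0} \<subseteq> (\<lambda>j. j - 1) ` {j. wt_tab T j \<noteq> 0}"
  proof
    fix i assume "i \<in> {i. c i \<noteq> 0}"
    then have i: "i \<noteq> 0" "eps_i \<nu> i T \<noteq> 0" by (auto simp: c_def split: if_splits)
    then have "cntw (Suc i) (word \<nu> T) \<noteq> 0" using eps_i_upper[of \<nu> i T] by linarith
    then have "wt_tab T (Suc i) \<noteq> 0" using cntw_wt[OF assms, of "Suc i"] by simp
    then show "i \<in> (\<lambda>j. j - 1) ` {j. wt_tab T j \<noteq> 0}" by force
  qed
  then have fin: "finite {i. c i \<noteq> 0}" using wl finite_subset by (fastforce simp: in_Lambda_def)
  have ev: "eps_vec \<nu> T = from_omega c" by (simp add: eps_vec_def c_def)
  show "in_Lambda (eps_vec \<nu> T)" using from_omega_fin(1)[OF fin] ev by simp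
  show "\<And>a. 1 \<le> a \<Longrightarrow> omega_coord (eps_vec \<nu> T) a = int (eps_i \<nu> a T)"
    using from_omega_fin(2)[OF fin] ev by (simp add: c_def)
  fix a :: nat assume a: "1 \<le> a"
  have "int (cntw (Suc a) (word \<nu> T)) - int (cntw a (word \<nu> T)) \<le> int (length (sig_stack a [] (word \<nu> T)))"
    using sig_len_lower[where i=a and s="[]" and v="word \<nu> T"] by simp
  also have "\<dots> \<le> int (eps_i \<nu> a T)" using eps_i_lower by simp
  finally show "wt_tab T (Suc a) - wt_tab T a \<le> int (eps_i \<nu> a T)"
    using cntw_wt[OF assms, of a] cntw_wt[OF assms, of "Suc a"] a by simp
qed

lemma phi_nonneg:
  assumes "is_partition \<nu>" "T \<in> SST \<nu>" "1 \<le> a"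
  shows "omega_coord (eps_vec \<nu> T) a \<ge> 0" "omega_coord (eps_vec \<nu> T) a + omega_coord (wt_tab T) a \<ge> 0"
  using eps_props(2)[OF assms(1,2) assms(3)] eps_props(3)[OF assms(1,2) assms(3)]
  by (auto simp: omega_coord_def)



lemma finite_funs:
  assumes "finite A" "\<And>x. x \<in> A \<Longrightarrow> finite (B x)"
  shows "finite {f. (\<forall>x\<in>A. f x \<in> B x) \<and> (\<forall>x. x \<notin> A \<longrightarrow> f x = z)}"
proof -
  have "{f. (\<forall>x\<in>A. f x \<in> B x) \<and> (\<forall>x. x \<notin> A \<longrightarrow> f x = z)}
        \<subseteq> (\<lambda>g x. if x \<in> A then g x else z) ` PiE A B"
  proof
    fix f assume f: "f \<in> {f. (\<forall>x\<in>A. f x \<in> B x) \<and> (\<forall>x. x \<notin> A \<longrightarrow> f x = z)}"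
    then have "f = (\<lambda>x. if x \<in> A then restrict f A x else z)" by (auto simp: fun_eq_iff)
    moreover have "restrict f A \<in> PiE A B" using f by auto
    ultimately show "f \<in> (\<lambda>g x. if x \<in> A then g x else z) ` PiE A B" by blast
  qed
  moreover have "finite (PiE A B)" using assms by (intro finite_PiE) auto
  ultimately show ?thesis using finite_subset by blast
qed

lemma finite_SST_bounded:
  assumes "is_partition \<nu>"
  shows "finite {T \<in> SST \<nu>. \<forall>p. T p \<le> n}"
proof -
  have "{T \<in> SST \<nu>. \<forall>p. T p \<le> n} \<subseteq> {f. (\<forall>x\<in>cells \<nu>. f x \<in> {..n}) \<and> (\<forall>x. x \<notin> cells \<nu> \<longrightarrow> f x = 0)}"
    using SST_zero by auto
  moreover have "finite {f. (\<forall>x\<in>cells \<nu>. f x \<in> {..n}) \<and> (\<forall>x. x \<notin> cells \<nu> \<longrightarrow> (f::tab) x = 0)}"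
    by (rule finite_funs) (use cells_finite[OF assms] in auto)
  ultimately show ?thesis using finite_subset by blast
qed

lemma finite_partitions_bounded:
  assumes "1 \<le> k"
  shows "finite {\<delta>. is_partition \<delta> \<and> k * boxes \<delta> = a}"
proof -
  have "{\<delta>. is_partition \<delta> \<and> k * boxes \<delta> = a} \<subseteq>
        {f. (\<forall>x\<in>{..a}. f x \<in> {0..int a}) \<and> (\<forall>x. x \<notin> {..a} \<longrightarrow> f x = 0)}"
  proof
    fix \<delta> assume d: "\<delta> \<in> {\<delta>. is_partition \<delta> \<and> k * boxes \<delta> = a}"
    then have p: "is_partition \<delta>" and b: "boxes \<delta> \<le> a" using assms
      by auto
    have "\<delta> x \<in> {0..int a}" for x using partition_nonneg[OF p] boxes_ge_entry[OF p, of x] b by auto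
    moreover have "\<delta> x = 0" if "x > a" for x
    proof (rule ccontr)
      assume "\<delta> x \<noteq> 0"
      then have "1 \<le> \<delta> x" using partition_nonneg[OF p, of x] by linarith
      moreover have "x \<noteq> 0" using p \<open>\<delta> x \<noteq> 0\<close> unfolding is_partition_def in_Lambda_def by (cases x) auto
      ultimately have "x \<le> boxes \<delta>" using boxes_ge_index[OF p] by simp
      then show False using b that by simp
    qed
    ultimately show "\<delta> \<in> {f. (\<forall>x\<in>{..a}. f x \<in> {0..int a}) \<and> (\<forall>x. x \<notin> {..a} \<longrightarrow> f x = 0)}"
      by (auto simp: not_le)
  qed
  moreover have "finite {f. (\<forall>x\<in>{..a}. f x \<in> {0..int a}) \<and> (\<forall>x. x \<notin> {..a} \<longrightarrow> (f::lwt) x = 0)}"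
    by (rule finite_funs) auto
  ultimately show ?thesis using finite_subset by blast
qed

lemma in_Lambda_omega_supp:
  assumes "finite I" "\<And>i. i \<in> I \<Longrightarrow> in_Lambda (f i)"
  shows "finite {a. \<exists>i\<in>I. omega_coord (f i) a \<noteq> 0}"
proof -
  have "{a. \<exists>i\<in>I. omega_coord (f i) a \<noteq> 0} \<subseteq>
        (\<Union>i\<in>I. {j. f i j \<noteq> 0} \<union> (\<lambda>j. j - 1) ` {j. f i j \<noteq> 0})"
  proof
    fix a assume "a \<in> {a. \<exists>i\<in>I. omega_coord (f i) a \<noteq> 0}"
    then obtain i where i: "i \<in> I" "f i a \<noteq> 0 \<or> f i (Suc a) \<noteq> 0" by (auto simp: omega_coord_def)
    show "a \<in> (\<Union>i\<in>I. {j. f i j \<noteq> 0} \<union> (\<lambda>j. j - 1) ` {j. f i j \<noteq> 0})"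
    proof (cases "f i a \<noteq> 0")
      case True then show ?thesis using i by blast
    next
      case False
      then have "Suc a \<in> {j. f i j \<noteq> 0}" using i by simp
      then have "a \<in> (\<lambda>j. j - 1) ` {j. f i j \<noteq> 0}" by (metis diff_Suc_1 image_eqI)
      then show ?thesis using i by blast
    qed
  qed
  moreover have "finite (\<Union>i\<in>I. {j. f i j \<noteq> 0} \<union> (\<lambda>j. j - 1) ` {j. f i j \<noteq> 0})"
    using assms by (auto simp: in_Lambda_def)
  ultimately show ?thesis using finite_subset by blast
qed

lemma cumwt_one: "cumwt Tp Tm 1 j = 0"
  by (simp add: cumwt_def)

lemma cumwt_Suc: "1 \<le> i \<Longrightarrow> cumwt Tp Tm (Suc i) j = cumwt Tp Tm i j + (wt_tab (Tp (Suc i)) j - wt_tab (Tm (Suc i)) j)"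
proof -
  assume "1 \<le> i"
  then have "{2..Suc i} = insert (Suc i) {2..i}" by auto
  then show ?thesis by (simp add: cumwt_def add.commute)
qed

lemma prev_in: "1 \<le> k \<Longrightarrow> i \<in> {1..k} \<Longrightarrow> prev k i \<in> {1..k}"
  by (auto simp: prev_def)



context
  fixes k :: nat and nup num :: "nat \<Rightarrow> lwt"
  assumes k: "1 \<le> k" and parts: "\<forall>i\<in>{1..k}. is_partition (nup i) \<and> is_partition (num i)"
begin

definition base :: "(nat \<Rightarrow> tab) \<Rightarrow> (nat \<Rightarrow> tab) \<Rightarrow> bool" where
  "base Tp Tm \<longleftrightarrow> (\<forall>i\<in>{1..k}. Tp i \<in> SST (nup i) \<and> Tm i \<in> SST (num i))
     \<and> (\<forall>i. i \<notin> {1..k} \<longrightarrow> Tp i = (\<lambda>_. 0) \<and> Tm i = (\<lambda>_. 0))"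

definition valid :: "(nat \<Rightarrow> tab) \<Rightarrow> (nat \<Rightarrow> tab) \<Rightarrow> (nat \<Rightarrow> lwt) \<Rightarrow> (nat \<Rightarrow> lwt) \<Rightarrow> bool" where
  "valid Tp Tm lam \<alpha> \<longleftrightarrow> is_ptuple k lam \<and> is_ptuple k \<alpha> \<and>
     (\<forall>i\<in>{1..k}. Tp i \<in> CLR (lam i) (\<alpha> i) (nup i) \<and> Tm i \<in> CLR (lam (prev k i)) (\<alpha> i) (num i))"

lemma Dtab_iff: "(Tp, Tm) \<in> Dtab k nup num \<longleftrightarrow> base Tp Tm \<and> (\<exists>lam \<alpha>. valid Tp Tm lam \<alpha>)"
  by (simp add: Dtab_def base_def valid_def)

lemma valid_base: "valid Tp Tm lam \<alpha> \<Longrightarrow> (\<forall>i. i \<notin> {1..k} \<longrightarrow> Tp i = (\<lambda>_. 0) \<and> Tm i = (\<lambda>_. 0)) \<Longrightarrow> base Tp Tm"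
  by (auto simp: valid_def base_def CLR_def)

lemma valid_chain:
  assumes "valid Tp Tm lam \<alpha>" "i \<in> {1..k}"
  shows "lam i j = lam 1 j + cumwt Tp Tm i j"
  using assms(2)
proof (induction i)
  case 0 then show ?case by simp
next
  case (Suc i)
  show ?case
  proof (cases "i = 0")
    case True then show ?thesis by (simp add: cumwt_def)
  next
    case False
    then have i: "i \<in> {1..k}" "Suc i \<in> {1..k}" "prev k (Suc i) = i" using Suc.prems by (auto simp: prev_def)
    have "\<alpha> (Suc i) j + wt_tab (Tm (Suc i)) j = lam i j"
      using assms(1) i by (auto simp: valid_def CLR_def)
    moreover have "\<alpha> (Suc i) j + wt_tab (Tp (Suc i)) j = lam (Suc i) j"
      using assms(1) i by (auto simp: valid_def CLR_def)
    ultimately show ?thesis using Suc.IH[OF i(1)] cumwt_Suc[of i Tp Tm j] False by simp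
  qed
qed

lemma valid_alpha:
  assumes "valid Tp Tm lam \<alpha>" "i \<in> {1..k}"
  shows "\<alpha> i j = lam i j - wt_tab (Tp i) j"
proof -
  have "\<forall>j. \<alpha> i j + wt_tab (Tp i) j = lam i j" using assms by (auto simp: valid_def CLR_def)
  then have "\<alpha> i j + wt_tab (Tp i) j = lam i j" by blast
  then show ?thesis by simp
qed

lemma valid_total:
  assumes "valid Tp Tm lam \<alpha>"
  shows "cumwt Tp Tm k j = wt_tab (Tm 1) j - wt_tab (Tp 1) j"
proof -
  have 1: "1 \<in> {1..k}" "k \<in> {1..k}" "prev k 1 = k" using k by (auto simp: prev_def)
  have "\<alpha> 1 j + wt_tab (Tm 1) j = lam k j" using assms 1 by (auto simp: valid_def CLR_def)
  moreover have "\<alpha> 1 j + wt_tab (Tp 1) j = lam 1 j" using assms 1 by (auto simp: valid_def CLR_def)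
  moreover have "lam k j = lam 1 j + cumwt Tp Tm k j" using valid_chain[OF assms 1(2)] .
  ultimately show ?thesis by simp
qed

lemma valid_omega:
  assumes "valid Tp Tm lam \<alpha>" "i \<in> {1..k}" "1 \<le> a"
  shows "omega_coord (S_plus nup Tp Tm i) a \<le> omega_coord (lam 1) a"
    and "omega_coord (S_minus num Tp Tm i) a \<le> omega_coord (lam 1) a"
proof -
  have d1: "dom_le (eps_vec (nup i) (Tp i)) (\<alpha> i)" and d2: "dom_le (eps_vec (num i) (Tm i)) (\<alpha> i)"
    using assms by (auto simp: valid_def CLR_def)
  have al: "\<alpha> i j = lam 1 j + cumwt Tp Tm i j - wt_tab (Tp i) j" for j
    using valid_alpha[OF assms(1,2)] valid_chain[OF assms(1,2)] by simp
  show "omega_coord (S_plus nup Tp Tm i) a \<le> omega_coord (lam 1) a"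
    using d1 assms(3) unfolding dom_le_def by (auto simp: omega_coord_def S_plus_def al)
  show "omega_coord (S_minus num Tp Tm i) a \<le> omega_coord (lam 1) a"
    using d2 assms(3) unfolding dom_le_def by (auto simp: omega_coord_def S_minus_def al)
qed

lemma base_SST: "base Tp Tm \<Longrightarrow> i \<in> {1..k} \<Longrightarrow> Tp i \<in> SST (nup i) \<and> Tm i \<in> SST (num i)
   \<and> is_partition (nup i) \<and> is_partition (num i)"
  using parts by (auto simp: base_def)

lemma cumwt_in_Lambda: assumes "base Tp Tm" "i \<le> k" shows "in_Lambda (cumwt Tp Tm i)"
  unfolding cumwt_def
proof (rule in_Lambda_sum)
  fix l assume "l \<in> {2..i}"
  then have "l \<in> {1..k}" using assms by auto
  note b = base_SST[OF assms(1) this]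
  show "in_Lambda (\<lambda>j. wt_tab (Tp l) j - wt_tab (Tm l) j)"
    using b wt_in_Lambda[of "nup l" "Tp l"] wt_in_Lambda[of "num l" "Tm l"] by (intro in_Lambda_diff) auto
qed simp

lemma S_in_Lambda:
  assumes "base Tp Tm" "i \<in> {1..k}"
  shows "in_Lambda (S_plus nup Tp Tm i)" "in_Lambda (S_minus num Tp Tm i)"
proof -
  note b = base_SST[OF assms]
  have c: "in_Lambda (cumwt Tp Tm i)" using cumwt_in_Lambda assms by auto
  have w: "in_Lambda (wt_tab (Tp i))" using b wt_in_Lambda by blast
  have e1: "in_Lambda (eps_vec (nup i) (Tp i))" using b eps_props(1) by blast
  have e2: "in_Lambda (eps_vec (num i) (Tm i))" using b eps_props(1) by blast
  show "in_Lambda (S_plus nup Tp Tm i)" unfolding S_plus_def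
    by (intro in_Lambda_diff in_Lambda_add e1 w c)
  show "in_Lambda (S_minus num Tp Tm i)" unfolding S_minus_def
    by (intro in_Lambda_diff in_Lambda_add e2 w c)
qed

definition Sa :: "(nat \<Rightarrow> tab) \<Rightarrow> (nat \<Rightarrow> tab) \<Rightarrow> nat \<Rightarrow> int set" where
  "Sa Tp Tm a = (\<lambda>i. omega_coord (S_plus nup Tp Tm i) a) ` {1..k}
          \<union> (\<lambda>i. omega_coord (S_minus num Tp Tm i) a) ` {1..k}"

lemma Sa_fin: "finite (Sa Tp Tm a)" "Sa Tp Tm a \<noteq> {}"
  using k by (auto simp: Sa_def)

lemma lam_min_eq: "lam_min k nup num Tp Tm = from_omega (\<lambda>a. Max (Sa Tp Tm a))"
  by (simp add: lam_min_def Sa_def)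

lemma lam_min_props:
  assumes "base Tp Tm"
  shows "in_Lambda (lam_min k nup num Tp Tm)"
    and "\<And>a. 1 \<le> a \<Longrightarrow> omega_coord (lam_min k nup num Tp Tm) a = Max (Sa Tp Tm a)"
proof -
  let ?I = "{1..k} \<times> {True, False}"
  let ?f = "\<lambda>(i, b). if b then S_plus nup Tp Tm i else S_minus num Tp Tm i"
  have fin1: "finite {a. \<exists>x\<in>?I. omega_coord (?f x) a \<noteq> 0}"
    by (rule in_Lambda_omega_supp) (use S_in_Lambda[OF assms] in auto)
  have "{a. Max (Sa Tp Tm a) \<noteq> 0} \<subseteq> {a. \<exists>x\<in>?I. omega_coord (?f x) a \<noteq> 0}"
  proof
    fix a assume "a \<in> {a. Max (Sa Tp Tm a) \<noteq> 0}"
    then have "Max (Sa Tp Tm a) \<in> Sa Tp Tm a" "Max (Sa Tp Tm a) \<noteq> 0" using Max_in[OF Sa_fin] by auto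
    then show "a \<in> {a. \<exists>x\<in>?I. omega_coord (?f x) a \<noteq> 0}" unfolding Sa_def by force
  qed
  then have fin: "finite {a. Max (Sa Tp Tm a) \<noteq> 0}" using fin1 finite_subset by blast
  show "in_Lambda (lam_min k nup num Tp Tm)" using from_omega_fin(1)[OF fin] lam_min_eq by simp
  show "\<And>a. 1 \<le> a \<Longrightarrow> omega_coord (lam_min k nup num Tp Tm) a = Max (Sa Tp Tm a)"
    using from_omega_fin(2)[OF fin] lam_min_eq by simp
qed

lemma lam_min_ge:
  assumes "base Tp Tm" "i \<in> {1..k}" "1 \<le> a"
  shows "omega_coord (S_plus nup Tp Tm i) a \<le> omega_coord (lam_min k nup num Tp Tm) a"
    and "omega_coord (S_minus num Tp Tm i) a \<le> omega_coord (lam_min k nup num Tp Tm) a"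
  using lam_min_props(2)[OF assms(1,3)] Max_ge[OF Sa_fin(1)] assms(2) by (auto simp: Sa_def)

lemma lam_min_le:
  assumes "base Tp Tm" "1 \<le> a"
    and "\<And>i. i \<in> {1..k} \<Longrightarrow> omega_coord (S_plus nup Tp Tm i) a \<le> x \<and> omega_coord (S_minus num Tp Tm i) a \<le> x"
  shows "omega_coord (lam_min k nup num Tp Tm) a \<le> x"
proof -
  have "Max (Sa Tp Tm a) \<in> Sa Tp Tm a" using Max_in[OF Sa_fin] by auto
  then show ?thesis using lam_min_props(2)[OF assms(1,2)] assms(3) by (auto simp: Sa_def)
qed


lemma alpha_part:
  assumes b: "base Tp Tm" and i: "i \<in> {1..k}" and x: "in_Lambda x"
    and xge: "\<And>a. 1 \<le> a \<Longrightarrow> omega_coord (lam_min k nup num Tp Tm) a \<le> omega_coord x a"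
  shows "is_partition (\<lambda>j. x j + cumwt Tp Tm i j - wt_tab (Tp i) j)"
    and "dom_le (eps_vec (nup i) (Tp i)) (\<lambda>j. x j + cumwt Tp Tm i j - wt_tab (Tp i) j)"
    and "dom_le (eps_vec (num i) (Tm i)) (\<lambda>j. x j + cumwt Tp Tm i j - wt_tab (Tp i) j)"
proof -
  note bs = base_SST[OF b i]
  have h1: "omega_coord (S_plus nup Tp Tm i) a \<le> omega_coord x a" if "1 \<le> a" for a
    using lam_min_ge(1)[OF b i that] xge[OF that] by linarith
  have h2: "omega_coord (S_minus num Tp Tm i) a \<le> omega_coord x a" if "1 \<le> a" for a
    using lam_min_ge(2)[OF b i that] xge[OF that] by linarith
  show d1: "dom_le (eps_vec (nup i) (Tp i)) (\<lambda>j. x j + cumwt Tp Tm i j - wt_tab (Tp i) j)"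
    unfolding dom_le_def
  proof (intro allI impI)
    fix a :: nat assume a: "1 \<le> a"
    show "0 \<le> omega_coord (\<lambda>j. x j + cumwt Tp Tm i j - wt_tab (Tp i) j - eps_vec (nup i) (Tp i) j) a"
      using h1[OF a] unfolding omega_coord_def S_plus_def by linarith
  qed
  show "dom_le (eps_vec (num i) (Tm i)) (\<lambda>j. x j + cumwt Tp Tm i j - wt_tab (Tp i) j)"
    unfolding dom_le_def
  proof (intro allI impI)
    fix a :: nat assume a: "1 \<le> a"
    show "0 \<le> omega_coord (\<lambda>j. x j + cumwt Tp Tm i j - wt_tab (Tp i) j - eps_vec (num i) (Tm i) j) a"
      using h2[OF a] unfolding omega_coord_def S_minus_def by linarith
  qed
  show "is_partition (\<lambda>j. x j + cumwt Tp Tm i j - wt_tab (Tp i) j)"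
  proof (rule partitionI)
    show "in_Lambda (\<lambda>j. x j + cumwt Tp Tm i j - wt_tab (Tp i) j)"
      using x cumwt_in_Lambda[OF b] i wt_in_Lambda[of "nup i" "Tp i"] bs
      by (intro in_Lambda_diff in_Lambda_add) auto
    fix a :: nat assume a: "1 \<le> a"
    have "omega_coord (eps_vec (nup i) (Tp i)) a \<ge> 0" using phi_nonneg(1)[OF _ _ a] bs by blast
    then show "omega_coord (\<lambda>j. x j + cumwt Tp Tm i j - wt_tab (Tp i) j) a \<ge> 0"
      using d1 a unfolding dom_le_def by (auto simp: omega_coord_def)
  qed
qed

lemma lamT_partition:
  assumes b: "base Tp Tm" and i: "i \<in> {1..k}"
  shows "is_partition (lam_T k nup num Tp Tm i)"
proof (rule partitionI)
  note bs = base_SST[OF b i]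
  show "in_Lambda (lam_T k nup num Tp Tm i)" unfolding lam_T_def
    using lam_min_props(1)[OF b] cumwt_in_Lambda[OF b] i by (intro in_Lambda_add) auto
  fix a :: nat assume a: "1 \<le> a"
  have "omega_coord (eps_vec (nup i) (Tp i)) a + omega_coord (wt_tab (Tp i)) a \<ge> 0"
    using phi_nonneg(2)[OF _ _ a] bs by blast
  moreover have "omega_coord (S_plus nup Tp Tm i) a \<le> omega_coord (lam_min k nup num Tp Tm) a"
    by (rule lam_min_ge(1)[OF b i a])
  ultimately show "omega_coord (lam_T k nup num Tp Tm i) a \<ge> 0"
    by (auto simp: omega_coord_def S_plus_def lam_T_def)
qed

lemma prev_cumwt:
  assumes tot: "\<And>j. cumwt Tp Tm k j = wt_tab (Tm 1) j - wt_tab (Tp 1) j" and i: "i \<in> {1..k}"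
  shows "cumwt Tp Tm (prev k i) j = cumwt Tp Tm i j - wt_tab (Tp i) j + wt_tab (Tm i) j"
proof (cases "i = 1")
  case True then show ?thesis using tot by (simp add: prev_def cumwt_def)
next
  case False
  then obtain i' where i': "i = Suc i'" "1 \<le> i'" using i by (cases i) auto
  then show ?thesis using cumwt_Suc[OF i'(2), of Tp Tm j] False by (simp add: prev_def)
qed

lemma suff:
  assumes b: "base Tp Tm" and tot: "\<And>j. cumwt Tp Tm k j = wt_tab (Tm 1) j - wt_tab (Tp 1) j"
    and d: "is_partition \<delta>"
  shows "valid Tp Tm (\<lambda>i. if i \<in> {1..k} then (\<lambda>j. lam_T k nup num Tp Tm i j + \<delta> j) else (\<lambda>_. 0))
                     (\<lambda>i. if i \<in> {1..k} then (\<lambda>j. lam_T k nup num Tp Tm i j + \<delta> j - wt_tab (Tp i) j) else (\<lambda>_. 0))"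
    (is "valid Tp Tm ?lam ?al")
proof -
  let ?x = "\<lambda>j. lam_min k nup num Tp Tm j + \<delta> j"
  have xl: "in_Lambda ?x" using lam_min_props(1)[OF b] d by (intro in_Lambda_add) (auto simp: is_partition_def)
  have xge: "omega_coord (lam_min k nup num Tp Tm) a \<le> omega_coord ?x a" if "1 \<le> a" for a
    using d that by (auto simp: is_partition_def omega_coord_def)
  have aleq: "?al i = (\<lambda>j. ?x j + cumwt Tp Tm i j - wt_tab (Tp i) j)" if "i \<in> {1..k}" for i
    using that by (auto simp: lam_T_def fun_eq_iff)
  have lp: "is_ptuple k ?lam" unfolding is_ptuple_def
  proof (intro conjI)
    show "\<forall>i\<in>{1..k}. is_partition (?lam i)"
    proof
      fix i assume i: "i \<in> {1..k}"
      show "is_partition (?lam i)" using partition_add[OF lamT_partition[OF b i] d] i by simp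
    qed
  qed simp
  have ap: "is_ptuple k ?al" unfolding is_ptuple_def
  proof (intro conjI)
    show "\<forall>i\<in>{1..k}. is_partition (?al i)"
    proof
      fix i assume i: "i \<in> {1..k}"
      show "is_partition (?al i)" using alpha_part(1)[OF b i xl xge] aleq[OF i] by simp
    qed
  qed simp
  have clr: "Tp i \<in> CLR (?lam i) (?al i) (nup i) \<and> Tm i \<in> CLR (?lam (prev k i)) (?al i) (num i)"
    if i: "i \<in> {1..k}" for i
  proof -
    have pi: "prev k i \<in> {1..k}" using prev_in[OF k i] .
    have "Tp i \<in> CLR (?lam i) (?al i) (nup i)"
      unfolding CLR_def using base_SST[OF b i] alpha_part(2)[OF b i xl xge] aleq[OF i] i by (auto simp: lam_T_def)
    moreover have "Tm i \<in> CLR (?lam (prev k i)) (?al i) (num i)"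
      unfolding CLR_def using base_SST[OF b i] alpha_part(3)[OF b i xl xge] aleq[OF i] i pi
        prev_cumwt[OF tot i] by (auto simp: lam_T_def)
    ultimately show ?thesis by blast
  qed
  show ?thesis unfolding valid_def using lp ap clr by blast
qed

lemma Dtab_total: "(Tp, Tm) \<in> Dtab k nup num \<Longrightarrow> cumwt Tp Tm k j = wt_tab (Tm 1) j - wt_tab (Tp 1) j"
  using valid_total by (auto simp: Dtab_iff)

lemma wt_pos:
  assumes "is_partition \<nu>" "T \<in> SST \<nu>" "T p = x" "1 \<le> x"
  shows "1 \<le> wt_tab T x"
proof -
  have "finite {q. T q = x}" using SST_level_sub[OF assms(2,4)] cells_finite[OF assms(1)] finite_subset by blast
  moreover have "{q. T q = x} \<noteq> {}" using assms(3) by blast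
  ultimately have "card {q. T q = x} > 0" by (simp add: card_gt_0_iff)
  then show ?thesis using assms(4) by (simp add: wt_tab_def)
qed

lemma D_bound:
  assumes D: "(Tp, Tm) \<in> Dtab k nup num" and i: "i \<in> {1..k}"
  shows "Tp i p \<le> (\<Sum>i\<in>{1..k}. boxes (lam_T k nup num Tp Tm i))"
    and "Tm i p \<le> (\<Sum>i\<in>{1..k}. boxes (lam_T k nup num Tp Tm i))"
proof -
  have b: "base Tp Tm" using D by (simp add: Dtab_iff)
  note bs = base_SST[OF b i]
  have tot: "\<And>j. cumwt Tp Tm k j = wt_tab (Tm 1) j - wt_tab (Tp 1) j" using Dtab_total[OF D] .
  let ?al = "\<lambda>j. lam_min k nup num Tp Tm j + cumwt Tp Tm i j - wt_tab (Tp i) j"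
  have alp: "is_partition ?al" by (rule alpha_part(1)[OF b i lam_min_props(1)[OF b]]) simp
  have le: "boxes (lam_T k nup num Tp Tm l) \<le> (\<Sum>i\<in>{1..k}. boxes (lam_T k nup num Tp Tm i))"
    if "l \<in> {1..k}" for l
    by (rule member_le_sum) (use that in auto)
  show "Tp i p \<le> (\<Sum>i\<in>{1..k}. boxes (lam_T k nup num Tp Tm i))"
  proof (cases "Tp i p = 0")
    case False
    then have x: "1 \<le> Tp i p" by simp
    have "1 \<le> wt_tab (Tp i) (Tp i p)" using wt_pos[of _ "Tp i" p "Tp i p"] x bs by blast
    moreover have "?al (Tp i p) \<ge> 0" using partition_nonneg[OF alp] .
    ultimately have "1 \<le> lam_T k nup num Tp Tm i (Tp i p)" by (simp add: lam_T_def)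
    then have "Tp i p \<le> boxes (lam_T k nup num Tp Tm i)"
      using boxes_ge_index[OF lamT_partition[OF b i] x] by simp
    then show ?thesis using le[OF i] by linarith
  qed simp
  show "Tm i p \<le> (\<Sum>i\<in>{1..k}. boxes (lam_T k nup num Tp Tm i))"
  proof (cases "Tm i p = 0")
    case False
    then have x: "1 \<le> Tm i p" by simp
    have pi: "prev k i \<in> {1..k}" using prev_in[OF k i] .
    have "1 \<le> wt_tab (Tm i) (Tm i p)" using wt_pos[of _ "Tm i" p "Tm i p"] x bs by blast
    moreover have "?al (Tm i p) \<ge> 0" using partition_nonneg[OF alp] .
    ultimately have "1 \<le> lam_T k nup num Tp Tm (prev k i) (Tm i p)"
      using prev_cumwt[OF tot i] by (simp add: lam_T_def)
    then have "Tm i p \<le> boxes (lam_T k nup num Tp Tm (prev k i))"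
      using boxes_ge_index[OF lamT_partition[OF b pi] x] by simp
    then show ?thesis using le[OF pi] by linarith
  qed simp
qed

lemma finite_D: "finite {T \<in> Dtab k nup num. (\<Sum>i\<in>{1..k}. boxes (lam_T k nup num (fst T) (snd T) i)) = n}"
proof -
  let ?Bp = "{Tp. (\<forall>i\<in>{1..k}. Tp i \<in> {T \<in> SST (nup i). \<forall>p. T p \<le> n}) \<and> (\<forall>i. i \<notin> {1..k} \<longrightarrow> Tp i = (\<lambda>_. 0))}"
  let ?Bm = "{Tm. (\<forall>i\<in>{1..k}. Tm i \<in> {T \<in> SST (num i). \<forall>p. T p \<le> n}) \<and> (\<forall>i. i \<notin> {1..k} \<longrightarrow> Tm i = (\<lambda>_. 0))}"
  have fp: "finite ?Bp"
  proof (rule finite_funs)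
    fix i assume "i \<in> {1..k}"
    then show "finite {T \<in> SST (nup i). \<forall>p. T p \<le> n}" using parts finite_SST_bounded by blast
  qed simp
  have fm: "finite ?Bm"
  proof (rule finite_funs)
    fix i assume "i \<in> {1..k}"
    then show "finite {T \<in> SST (num i). \<forall>p. T p \<le> n}" using parts finite_SST_bounded by blast
  qed simp
  have sub: "{T \<in> Dtab k nup num. (\<Sum>i\<in>{1..k}. boxes (lam_T k nup num (fst T) (snd T) i)) = n} \<subseteq> ?Bp \<times> ?Bm"
  proof
    fix T assume T: "T \<in> {T \<in> Dtab k nup num. (\<Sum>i\<in>{1..k}. boxes (lam_T k nup num (fst T) (snd T) i)) = n}"
    obtain Tp Tm where e: "T = (Tp, Tm)" by (cases T)
    have D: "(Tp, Tm) \<in> Dtab k nup num" and s: "(\<Sum>i\<in>{1..k}. boxes (lam_T k nup num Tp Tm i)) = n"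
      using T e by auto
    have b: "base Tp Tm" using D by (simp add: Dtab_iff)
    have "Tp \<in> ?Bp"
    proof -
      have "\<forall>i\<in>{1..k}. Tp i \<in> {T \<in> SST (nup i). \<forall>p. T p \<le> n}"
        using D_bound(1)[OF D] s base_SST[OF b] by simp
      moreover have "\<forall>i. i \<notin> {1..k} \<longrightarrow> Tp i = (\<lambda>_. 0)" using b by (simp add: base_def)
      ultimately show ?thesis by blast
    qed
    moreover have "Tm \<in> ?Bm"
    proof -
      have "\<forall>i\<in>{1..k}. Tm i \<in> {T \<in> SST (num i). \<forall>p. T p \<le> n}"
        using D_bound(2)[OF D] s base_SST[OF b] by simp
      moreover have "\<forall>i. i \<notin> {1..k} \<longrightarrow> Tm i = (\<lambda>_. 0)" using b by (simp add: base_def)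
      ultimately show ?thesis by blast
    qed
    ultimately show "T \<in> ?Bp \<times> ?Bm" using e by simp
  qed
  show ?thesis by (rule finite_subset[OF sub finite_cartesian_product[OF fp fm]])
qed


definition Aset :: "nat \<Rightarrow> ((nat \<Rightarrow> lwt) \<times> (nat \<Rightarrow> lwt)) set" where
  "Aset n = {(\<alpha>, lam). is_ptuple k \<alpha> \<and> is_ptuple k lam \<and> (\<Sum>i\<in>{1..k}. boxes (lam i)) = n}"

definition Wp :: "(nat \<Rightarrow> lwt) \<times> (nat \<Rightarrow> lwt) \<Rightarrow> ((nat \<Rightarrow> tab) \<times> (nat \<Rightarrow> tab)) set" where
  "Wp p = {(Tp, Tm). (\<forall>i\<in>{1..k}. Tp i \<in> CLR (snd p i) (fst p i) (nup i) \<and> Tm i \<in> CLR (snd p (prev k i)) (fst p i) (num i))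
            \<and> (\<forall>i. i \<notin> {1..k} \<longrightarrow> Tp i = (\<lambda>_. 0) \<and> Tm i = (\<lambda>_. 0))}"

definition Yset :: "nat \<Rightarrow> (lwt \<times> ((nat \<Rightarrow> tab) \<times> (nat \<Rightarrow> tab))) set" where
  "Yset n = {(\<delta>, T). is_partition \<delta> \<and> T \<in> Dtab k nup num \<and>
      k * boxes \<delta> + (\<Sum>i\<in>{1..k}. boxes (lam_T k nup num (fst T) (snd T) i)) = n}"

definition hmap :: "((nat \<Rightarrow> lwt) \<times> (nat \<Rightarrow> lwt)) \<times> ((nat \<Rightarrow> tab) \<times> (nat \<Rightarrow> tab)) \<Rightarrow> lwt \<times> ((nat \<Rightarrow> tab) \<times> (nat \<Rightarrow> tab))" where
  "hmap x = ((\<lambda>j. snd (fst x) 1 j - lam_min k nup num (fst (snd x)) (snd (snd x)) j), snd x)"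

definition ginv :: "lwt \<times> ((nat \<Rightarrow> tab) \<times> (nat \<Rightarrow> tab)) \<Rightarrow> ((nat \<Rightarrow> lwt) \<times> (nat \<Rightarrow> lwt)) \<times> ((nat \<Rightarrow> tab) \<times> (nat \<Rightarrow> tab))" where
  "ginv y = (((\<lambda>i. if i \<in> {1..k} then (\<lambda>j. lam_T k nup num (fst (snd y)) (snd (snd y)) i j + fst y j - wt_tab (fst (snd y) i) j) else (\<lambda>_. 0)),
              (\<lambda>i. if i \<in> {1..k} then (\<lambda>j. lam_T k nup num (fst (snd y)) (snd (snd y)) i j + fst y j) else (\<lambda>_. 0))), snd y)"

lemma ginv_simp: "ginv (\<delta>, (Tp, Tm)) = (((\<lambda>i. if i \<in> {1..k} then (\<lambda>j. lam_T k nup num Tp Tm i j + \<delta> j - wt_tab (Tp i) j) else (\<lambda>_. 0)),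
              (\<lambda>i. if i \<in> {1..k} then (\<lambda>j. lam_T k nup num Tp Tm i j + \<delta> j) else (\<lambda>_. 0))), (Tp, Tm))"
  unfolding ginv_def by (simp only: fst_conv snd_conv)

lemma mem_Sigma_iff:
  "((\<alpha>, lam), (Tp, Tm)) \<in> Sigma (Aset n) Wp \<longleftrightarrow> valid Tp Tm lam \<alpha>
     \<and> (\<forall>i. i \<notin> {1..k} \<longrightarrow> Tp i = (\<lambda>_. 0) \<and> Tm i = (\<lambda>_. 0)) \<and> (\<Sum>i\<in>{1..k}. boxes (lam i)) = n"
  by (auto simp: Aset_def Wp_def valid_def)

lemma boxes_shift:
  assumes b: "base Tp Tm" and d: "is_partition \<delta>"
    and l: "\<And>i. i \<in> {1..k} \<Longrightarrow> lam i = (\<lambda>j. lam_T k nup num Tp Tm i j + \<delta> j)"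
  shows "(\<Sum>i\<in>{1..k}. boxes (lam i)) = k * boxes \<delta> + (\<Sum>i\<in>{1..k}. boxes (lam_T k nup num Tp Tm i))"
proof -
  have "(\<Sum>i\<in>{1..k}. boxes (lam i)) = (\<Sum>i\<in>{1..k}. boxes (lam_T k nup num Tp Tm i) + boxes \<delta>)"
    by (rule sum.cong) (simp_all add: l boxes_add[OF lamT_partition[OF b] d])
  then show ?thesis by (simp add: sum.distrib)
qed

lemma card_Wp:
  "(\<Prod>i\<in>{1..k}. lr_coeff (snd p i) (fst p i) (nup i) * lr_coeff (snd p (prev k i)) (fst p i) (num i)) = card (Wp p)"
proof -
  let ?C = "\<lambda>i. CLR (snd p i) (fst p i) (nup i) \<times> CLR (snd p (prev k i)) (fst p i) (num i)"
  let ?F = "\<lambda>T::(nat \<Rightarrow> tab) \<times> (nat \<Rightarrow> tab). restrict (\<lambda>i. (fst T i, snd T i)) {1..k}"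
  let ?G = "\<lambda>f. ((\<lambda>i. if i \<in> {1..k} then fst (f i) else (\<lambda>_. 0)), (\<lambda>i. if i \<in> {1..k} then snd (f i) else (\<lambda>_. 0)))"
  have "bij_betw ?F (Wp p) (PiE {1..k} ?C)"
  proof (rule bij_betw_byWitness[where f'="?G"])
    show "\<forall>a\<in>Wp p. ?G (?F a) = a" by (auto simp: Wp_def fun_eq_iff)
    show "\<forall>a'\<in>PiE {1..k} ?C. ?F (?G a') = a'" by (auto simp: fun_eq_iff PiE_def extensional_def)
    show "?F ` Wp p \<subseteq> PiE {1..k} ?C" by (auto simp: Wp_def)
    show "?G ` PiE {1..k} ?C \<subseteq> Wp p"
    proof
      fix y assume "y \<in> ?G ` PiE {1..k} ?C"
      then obtain x where x: "x \<in> PiE {1..k} ?C" "y = ?G x" by blast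
      have "\<And>i. i \<in> {1..k} \<Longrightarrow> x i \<in> ?C i" using x(1) by (simp add: PiE_iff)
      then show "y \<in> Wp p" using x(2) unfolding Wp_def by (auto simp: mem_Times_iff)
    qed
  qed
  then have "card (Wp p) = card (PiE {1..k} ?C)" by (rule bij_betw_same_card)
  also have "\<dots> = (\<Prod>i\<in>{1..k}. card (?C i))" by (rule card_PiE) simp
  finally show ?thesis by (simp add: lr_coeff_def card_cartesian_product)
qed


lemma hmap_into:
  assumes x: "x \<in> Sigma (Aset n) Wp"
  shows "hmap x \<in> Yset n" and "ginv (hmap x) = x"
proof -
  obtain \<alpha> lam Tp Tm where e: "x = ((\<alpha>, lam), (Tp, Tm))" by (metis prod.exhaust)
  have v: "valid Tp Tm lam \<alpha>" and z: "\<forall>i. i \<notin> {1..k} \<longrightarrow> Tp i = (\<lambda>_. 0) \<and> Tm i = (\<lambda>_. 0)"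
    and s: "(\<Sum>i\<in>{1..k}. boxes (lam i)) = n" using x e mem_Sigma_iff by auto
  have b: "base Tp Tm" using valid_base[OF v z] .
  have D: "(Tp, Tm) \<in> Dtab k nup num" using b v by (auto simp: Dtab_iff)
  define \<delta> where "\<delta> = (\<lambda>j. lam 1 j - lam_min k nup num Tp Tm j)"
  have h: "hmap x = (\<delta>, (Tp, Tm))" by (simp add: hmap_def e \<delta>_def)
  have one: "1 \<in> {1..k}" using k by simp
  have l1: "is_partition (lam 1)" using v one by (auto simp: valid_def is_ptuple_def)
  have dp: "is_partition \<delta>"
  proof (rule partitionI)
    show "in_Lambda \<delta>" unfolding \<delta>_def
      using l1 lam_min_props(1)[OF b] by (intro in_Lambda_diff) (auto simp: is_partition_def)
    fix a :: nat assume a: "1 \<le> a"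
    have "omega_coord (lam_min k nup num Tp Tm) a \<le> omega_coord (lam 1) a"
      by (rule lam_min_le[OF b a]) (use valid_omega[OF v _ a] in blast)
    then show "0 \<le> omega_coord \<delta> a" by (simp add: \<delta>_def omega_coord_def)
  qed
  have lam_eq: "lam i = (\<lambda>j. lam_T k nup num Tp Tm i j + \<delta> j)" if "i \<in> {1..k}" for i
    using valid_chain[OF v that] by (auto simp: fun_eq_iff lam_T_def \<delta>_def)
  have "(\<Sum>i\<in>{1..k}. boxes (lam i)) = k * boxes \<delta> + (\<Sum>i\<in>{1..k}. boxes (lam_T k nup num Tp Tm i))"
    by (rule boxes_shift[OF b dp lam_eq])
  then show "hmap x \<in> Yset n" using h s dp D by (simp add: Yset_def)
  have pl: "is_ptuple k lam" and pa: "is_ptuple k \<alpha>" using v by (auto simp: valid_def)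
  have L: "(\<lambda>i. if i \<in> {1..k} then (\<lambda>j. lam_T k nup num Tp Tm i j + \<delta> j) else (\<lambda>_. 0)) = lam"
    using lam_eq pl by (auto simp: fun_eq_iff is_ptuple_def)
  have A: "(\<lambda>i. if i \<in> {1..k} then (\<lambda>j. lam_T k nup num Tp Tm i j + \<delta> j - wt_tab (Tp i) j) else (\<lambda>_. 0)) = \<alpha>"
  proof (rule ext)
    fix i show "(if i \<in> {1..k} then (\<lambda>j. lam_T k nup num Tp Tm i j + \<delta> j - wt_tab (Tp i) j) else (\<lambda>_. 0)) = \<alpha> i"
    proof (cases "i \<in> {1..k}")
      case True
      then show ?thesis using lam_eq[OF True] valid_alpha[OF v True] by (auto simp: fun_eq_iff)
    next
      case False
      then show ?thesis using pa by (auto simp: is_ptuple_def)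
    qed
  qed
  have "ginv (hmap x) = ((\<alpha>, lam), (Tp, Tm))" unfolding h ginv_simp L A ..
  then show "ginv (hmap x) = x" using e by simp
qed

lemma ginv_into:
  assumes y: "y \<in> Yset n"
  shows "ginv y \<in> Sigma (Aset n) Wp" and "hmap (ginv y) = y"
proof -
  obtain \<delta> Tp Tm where e: "y = (\<delta>, (Tp, Tm))" by (metis prod.exhaust)
  have dp: "is_partition \<delta>" and D: "(Tp, Tm) \<in> Dtab k nup num"
    and s: "k * boxes \<delta> + (\<Sum>i\<in>{1..k}. boxes (lam_T k nup num Tp Tm i)) = n"
    using y e by (auto simp: Yset_def)
  have b: "base Tp Tm" using D by (simp add: Dtab_iff)
  let ?lam = "\<lambda>i. if i \<in> {1..k} then (\<lambda>j. lam_T k nup num Tp Tm i j + \<delta> j) else (\<lambda>_. 0)"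
  let ?al = "\<lambda>i. if i \<in> {1..k} then (\<lambda>j. lam_T k nup num Tp Tm i j + \<delta> j - wt_tab (Tp i) j) else (\<lambda>_. 0)"
  have g: "ginv y = ((?al, ?lam), (Tp, Tm))" unfolding e by (rule ginv_simp)
  have v: "valid Tp Tm ?lam ?al" by (rule suff[OF b Dtab_total[OF D] dp])
  have z: "\<forall>i. i \<notin> {1..k} \<longrightarrow> Tp i = (\<lambda>_. 0) \<and> Tm i = (\<lambda>_. 0)" using b by (simp add: base_def)
  have "(\<Sum>i\<in>{1..k}. boxes (?lam i)) = k * boxes \<delta> + (\<Sum>i\<in>{1..k}. boxes (lam_T k nup num Tp Tm i))"
    by (rule boxes_shift[OF b dp]) simp
  then show "ginv y \<in> Sigma (Aset n) Wp" unfolding g mem_Sigma_iff using v z s by simp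
  have "1 \<in> {1..k}" using k by simp
  then have "hmap (ginv y) = (\<delta>, (Tp, Tm))" unfolding g hmap_def by (simp add: lam_T_def cumwt_def)
  then show "hmap (ginv y) = y" using e by simp
qed

lemma bij_hmap: "bij_betw hmap (Sigma (Aset n) Wp) (Yset n)"
  by (rule bij_betw_byWitness[where f'=ginv]) (use hmap_into ginv_into in blast)+


lemma Y_union: "Yset n = (\<Union>a\<in>{0..n}. {\<delta>. is_partition \<delta> \<and> k * boxes \<delta> = a}
     \<times> {T \<in> Dtab k nup num. (\<Sum>i\<in>{1..k}. boxes (lam_T k nup num (fst T) (snd T) i)) = n - a})"
  by (auto simp: Yset_def)

lemma card_Y: "card (Yset n) = (\<Sum>a=0..n. card {\<delta>. is_partition \<delta> \<and> k * boxes \<delta> = a}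
     * card {T \<in> Dtab k nup num. (\<Sum>i\<in>{1..k}. boxes (lam_T k nup num (fst T) (snd T) i)) = n - a})"
    and fin_Y: "finite (Yset n)"
proof -
  let ?P = "\<lambda>a. {\<delta>. is_partition \<delta> \<and> k * boxes \<delta> = a}"
  let ?D = "\<lambda>a. {T \<in> Dtab k nup num. (\<Sum>i\<in>{1..k}. boxes (lam_T k nup num (fst T) (snd T) i)) = n - a}"
  have fin: "finite (?P a \<times> ?D a)" for a
    using finite_partitions_bounded[OF k] finite_D by blast
  have disj: "\<forall>a\<in>{0..n}. \<forall>b\<in>{0..n}. a \<noteq> b \<longrightarrow> (?P a \<times> ?D a) \<inter> (?P b \<times> ?D b) = {}" by auto
  have "card (\<Union>a\<in>{0..n}. ?P a \<times> ?D a) = (\<Sum>a=0..n. card (?P a \<times> ?D a))"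
    by (rule card_UN_disjoint) (use fin disj in auto)
  then show "card (Yset n) = (\<Sum>a=0..n. card (?P a) * card (?D a))"
    by (simp add: Y_union card_cartesian_product)
  show "finite (Yset n)" unfolding Y_union using fin by blast
qed

lemma coeff_main:
  "infsum (\<lambda>p. real (\<Prod>i\<in>{1..k}. lr_coeff (snd p i) (fst p i) (nup i)
                                    * lr_coeff (snd p (prev k i)) (fst p i) (num i)))
       {(\<alpha>, lam). is_ptuple k \<alpha> \<and> is_ptuple k lam \<and> (\<Sum>i\<in>{1..k}. boxes (lam i)) = n}
   = (\<Sum>a=0..n. real (card {\<delta>. is_partition \<delta> \<and> k * boxes \<delta> = a})
     * real (card {T \<in> Dtab k nup num. (\<Sum>i\<in>{1..k}. boxes (lam_T k nup num (fst T) (snd T) i)) = n - a}))"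
proof -
  let ?g = "\<lambda>p. real (\<Prod>i\<in>{1..k}. lr_coeff (snd p i) (fst p i) (nup i)
                                    * lr_coeff (snd p (prev k i)) (fst p i) (num i))"
  have gW: "?g p = real (card (Wp p))" for p using card_Wp[of p] by simp
  let ?Sg = "Sigma (Aset n) Wp"
  have bij: "bij_betw hmap ?Sg (Yset n)" by (rule bij_hmap)
  have finS: "finite ?Sg" using bij_betw_finite[OF bij] fin_Y by blast
  define S where "S = fst ` ?Sg"
  have finS': "finite S" using finS by (simp add: S_def)
  have SA: "S \<subseteq> Aset n" by (auto simp: S_def)
  have zero: "?g p = 0" if "p \<in> Aset n - S" for p
  proof -
    have "Wp p = {}"
    proof (rule ccontr)
      assume "Wp p \<noteq> {}"
      then obtain T where "T \<in> Wp p" by blast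
      then have "(p, T) \<in> ?Sg" using that by auto
      then have "p \<in> S" by (force simp: S_def)
      then show False using that by blast
    qed
    then show ?thesis using gW by simp
  qed
  have "infsum ?g (Aset n) = infsum ?g S"
    by (rule infsum_cong_neutral) (use zero SA in auto)
  also have "\<dots> = sum ?g S" using finS' by (rule infsum_finite)
  also have "\<dots> = real (\<Sum>p\<in>S. card (Wp p))" using gW by simp
  also have "(\<Sum>p\<in>S. card (Wp p)) = card (Sigma S Wp)"
  proof (rule card_SigmaI[symmetric])
    show "finite S" by (rule finS')
    show "\<forall>a\<in>S. finite (Wp a)"
    proof
      fix a assume "a \<in> S"
      have "Wp a \<subseteq> snd ` ?Sg" using \<open>a \<in> S\<close> SA by force
      then show "finite (Wp a)" using finS finite_subset by blast
    qed
  qed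
  also have "Sigma S Wp = ?Sg" using SA by (force simp: S_def)
  also have "card ?Sg = card (Yset n)" by (rule bij_betw_same_card[OF bij])
  finally have "infsum ?g (Aset n) = real (card (Yset n))" .
  then show ?thesis by (simp add: card_Y Aset_def)
qed

end

theorem mainTheorem11:
  fixes k :: nat and nup num :: "nat \<Rightarrow> lwt"
  assumes "1 \<le> k"
    and "\<forall>i\<in>{1..k}. is_partition (nup i) \<and> is_partition (num i)"
  shows "m_inf k nup num / prodP k =
     Abs_fps (\<lambda>n. real (card {\<delta>. is_partition \<delta> \<and> k * boxes \<delta> = n}))
     * Abs_fps (\<lambda>n. real (card {T \<in> Dtab k nup num.
          (\<Sum>i\<in>{1..k}. boxes (lam_T k nup num (fst T) (snd T) i)) = n}))"
proof -
  define F where "F = Abs_fps (\<lambda>n.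
     infsum (\<lambda>p. real (\<Prod>i\<in>{1..k}. lr_coeff (snd p i) (fst p i) (nup i)
                                    * lr_coeff (snd p (prev k i)) (fst p i) (num i)))
       {(\<alpha>, lam). is_ptuple k \<alpha> \<and> is_ptuple k lam \<and> (\<Sum>i\<in>{1..k}. boxes (lam i)) = n})"
  have m: "m_inf k nup num = prodP k * F" by (simp add: m_inf_def F_def)
  have "fps_nth (prodP k) 0 = 1" by (simp add: prodP_def)
  then have nz: "prodP k \<noteq> 0" by auto
  have "m_inf k nup num / prodP k = F" using nz by (simp add: m)
  also have "F = Abs_fps (\<lambda>n. real (card {\<delta>. is_partition \<delta> \<and> k * boxes \<delta> = n}))
     * Abs_fps (\<lambda>n. real (card {T \<in> Dtab k nup num.
          (\<Sum>i\<in>{1..k}. boxes (lam_T k nup num (fst T) (snd T) i)) = n}))"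
    by (rule fps_ext) (simp only: F_def fps_mult_nth fps_nth_Abs_fps coeff_main[OF assms])
  finally show ?thesis .
qed


end
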